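(* Let $L\ge 2$, let $\Omega\subsetneq\mathbb{Z}_L$ with $|\Omega|=n$, and let $K\ge 2$. Let $\mathfrak{C}=\{\mathcal{C}^0,\dots,\mathcal{C}^{K-1}\}$, where each $\mathcal{C}^i=\{C^i_0,\dots,C^i_{M-1}\}$ is a set of $M$ complex sequences of length $L$, every sequence $C^i_j$ satisfying the spectral constraint: its frequency-domain dual $(\hat c^i_{j,0},\dots,\hat c^i_{j,L-1})$ satisfies $|\hat c^i_{j,k}|^2=\frac{L}{L-n}$ for $k\notin\Omega$ and $\hat c^i_{j,k}=0$ for $k\in\Omega$. Define $\theta_c(\mathfrak{C})=\max\{|\theta_{C^i_l,C^j_m}(\tau)|:0\le i\neq j<K,\ 0\le l,m<M,\ 0\le \tau<L\}$. Then $$\theta_c(\mathfrak{C})\ge\frac{L}{\sqrt{L-n}}.$$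
   Context: $\omega_L=e^{2\pi\sqrt{-1}/L}$. For a length-$L$ sequence $C=(c_0,\dots,c_{L-1})$ its frequency-domain dual is $\widehat C=(\hat c_0,\dots,\hat c_{L-1})$ with $\hat c_k=\frac{1}{\sqrt L}\sum_{t=0}^{L-1}c_t\omega_L^{-tk}$. The periodic cross-correlation of length-$L$ sequences $C,D$ is $\theta_{C,D}(\tau)=\sum_{t=0}^{L-1}c_t d^*_{\langle t+\tau\rangle_L}$, where $\langle\cdot\rangle_L$ is reduction mod $L$. *)

theory Defs
  imports Complex_Main
begin

text \<open>Sequences of length L are functions nat \<Rightarrow> complex, only indices t < L matter.\<close>

definition omega :: "nat \<Rightarrow> complex" where
  "omega L = exp (2 * of_real pi * \<i> / of_nat L)"

definition dual :: "nat \<Rightarrow> (nat \<Rightarrow> complex) \<Rightarrow> nat \<Rightarrow> complex" where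
  "dual L c k = (1 / of_real (sqrt (real L))) *
     (\<Sum>t<L. c t * inverse (omega L) ^ (t * k))"

definition pcorr :: "nat \<Rightarrow> (nat \<Rightarrow> complex) \<Rightarrow> (nat \<Rightarrow> complex) \<Rightarrow> nat \<Rightarrow> complex" where
  "pcorr L c d \<tau> = (\<Sum>t<L. c t * cnj (d ((t + \<tau>) mod L)))"

definition spectral_constraint :: "nat \<Rightarrow> nat set \<Rightarrow> (nat \<Rightarrow> complex) \<Rightarrow> bool" where
  "spectral_constraint L \<Omega> c \<longleftrightarrow>
     (\<forall>k<L. (k \<notin> \<Omega> \<longrightarrow> (cmod (dual L c k))\<^sup>2 = real L / (real L - real (card \<Omega>)))
           \<and> (k \<in> \<Omega> \<longrightarrow> dual L c k = 0))"

text \<open>Maximum cross-correlation magnitude between sequences of distinct sets.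
  C i l is the l-th sequence of the i-th set.\<close>
definition theta_c :: "nat \<Rightarrow> nat \<Rightarrow> nat \<Rightarrow> (nat \<Rightarrow> nat \<Rightarrow> nat \<Rightarrow> complex) \<Rightarrow> real" where
  "theta_c L K M C = Max {cmod (pcorr L (C i l) (C j m) \<tau>) | i j l m \<tau>.
       i < K \<and> j < K \<and> i \<noteq> j \<and> l < M \<and> m < M \<and> \<tau> < L}"

end

theory Submission imports Defs "HOL-Analysis.Complex_Transcendental" begin

lemma omega_pow: "omega L ^ e = exp (2 * of_real pi * \<i> * of_nat e / of_nat L)"
  unfolding omega_def by (simp add: exp_of_nat_mult[symmetric] mult.commute mult.left_commute)

lemma omega_pow_eq_1: assumes "L > 0" shows "omega L ^ e = 1 \<longleftrightarrow> L dvd e"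
proof
  assume "omega L ^ e = 1"
  then obtain m :: int where m: "2 * pi * real e / real L = of_int (2*m) * pi"
    unfolding omega_pow exp_eq_1 by (auto simp: field_simps)
  then have "real e = real L * of_int m" using assms by (auto simp: field_simps)
  then have "int e = int L * m" by (metis of_int_eq_iff of_int_mult of_int_of_nat_eq)
  then show "L dvd e" by (metis dvd_triv_left int_dvd_int_iff)
next
  assume "L dvd e" then obtain m where "e = L * m" by auto
  then have "2 * of_real pi * \<i> * of_nat e / of_nat L = of_nat m * (2 * of_real pi * \<i>)" using assms
    by (simp add: field_simps)
  then show "omega L ^ e = 1" unfolding omega_pow by (simp add: exp_of_nat_mult)
qed

lemma omega_sum: assumes "L > 0"
  shows "(\<Sum>k<L. (omega L ^ e) ^ k) = (if L dvd e then of_nat L else 0)"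
proof (cases "L dvd e")
  case True then have "omega L ^ e = 1" using omega_pow_eq_1[OF assms] by simp
  then show ?thesis using True by simp
next
  case False
  then have ne: "omega L ^ e \<noteq> 1" using omega_pow_eq_1[OF assms] by simp
  have "(omega L ^ e) ^ L = 1" using omega_pow_eq_1[OF assms, of "e*L"]
    by (simp add: power_mult[symmetric])
  then show ?thesis using False geometric_sum[OF ne, of L] by simp
qed

lemma omega_ne0: "omega L \<noteq> 0" unfolding omega_def by simp

lemma cnj_omega: "cnj (omega L) = inverse (omega L)"
proof -
  have "cnj (omega L) = exp (- (2 * of_real pi * \<i> / of_nat L))"
    unfolding omega_def by (simp add: exp_cnj complex_cnj_divide)
  then show ?thesis unfolding omega_def by (simp add: exp_minus)
qed

lemma inv_omega: assumes "L > 0" shows "inverse (omega L) = omega L ^ (L - 1)"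
proof -
  have "omega L * omega L ^ (L-1) = 1" using omega_pow_eq_1[OF assms, of L] assms
    by (metis Suc_diff_1 dvd_refl power_Suc)
  then show ?thesis by (metis inverse_unique)
qed

lemma dvd_lemma: fixes L u x :: nat assumes "L > 0" "u < L" shows "L dvd ((L-1)*x + u) \<longleftrightarrow> u = x mod L"
proof -
  have e: "(L-1)*x + x = L*x" using assms by (cases L) auto
  have "int ((L-1)*x + u) = int L * int x + (int u - int x)"
    using arg_cong[OF e, of int] by (simp add: algebra_simps)
  then have "L dvd ((L-1)*x + u) \<longleftrightarrow> int L dvd (int u - int x)"
    by (metis dvd_add_right_iff dvd_triv_left int_dvd_int_iff)
  also have "\<dots> \<longleftrightarrow> int u mod int L = int x mod int L" by (simp add: mod_eq_dvd_iff)
  also have "\<dots> \<longleftrightarrow> u = x mod L" using assms by (metis mod_less of_nat_eq_iff zmod_int)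
  finally show ?thesis .
qed

lemma cnj_dual: "cnj (dual L d k) = (1 / of_real (sqrt (real L))) * (\<Sum>u<L. cnj (d u) * omega L ^ (u * k))"
proof -
  have "cnj (inverse (omega L)) = omega L" using cnj_omega
    by (metis complex_cnj_cnj complex_cnj_inverse inverse_inverse_eq)
  then show ?thesis unfolding dual_def by (simp add: cnj_sum)
qed

lemma corr_formula: assumes L: "L > 0"
  shows "pcorr L c d \<tau> = (\<Sum>k<L. dual L c k * cnj (dual L d k) * inverse (omega L) ^ (\<tau> * k))"
proof -
  let ?w = "omega L"
  define e where "e t u = (L-1)*(t+\<tau>) + u" for t u
  have sq: "(1 / of_real (sqrt (real L))) * (1 / of_real (sqrt (real L))) = (1 / of_nat L :: complex)"
  proof -
    have "sqrt (real L) * sqrt (real L) = real L" by simp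
    then have "of_real (sqrt (real L)) * of_real (sqrt (real L)) = (of_nat L :: complex)"
      by (metis of_real_mult of_real_of_nat_eq)
    then show ?thesis by (simp add: field_simps)
  qed
  have pw: "inverse ?w ^ (t*k) * ?w ^ (u*k) * inverse ?w ^ (\<tau>*k) = (?w ^ e t u) ^ k" for t u k
  proof -
    have "inverse ?w ^ (t*k) * ?w ^ (u*k) * inverse ?w ^ (\<tau>*k)
        = ?w ^ ((L-1)*(t*k) + u*k + (L-1)*(\<tau>*k))"
      unfolding inv_omega[OF L] by (simp add: power_add power_mult)
    also have "(L-1)*(t*k) + u*k + (L-1)*(\<tau>*k) = e t u * k" unfolding e_def using L by (cases L) (simp_all add: algebra_simps)
    finally show ?thesis by (simp add: power_mult)
  qed
  have "(\<Sum>k<L. dual L c k * cnj (dual L d k) * inverse ?w ^ (\<tau> * k))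
      = (\<Sum>k<L. (1 / of_nat L) * (\<Sum>t<L. \<Sum>u<L. c t * cnj (d u) * (?w ^ e t u) ^ k))"
  proof (rule sum.cong[OF refl])
    fix k
    have "dual L c k * cnj (dual L d k) * inverse ?w ^ (\<tau> * k) =
       (1 / of_nat L) * ((\<Sum>t<L. c t * inverse ?w ^ (t * k)) * (\<Sum>u<L. cnj (d u) * ?w ^ (u * k))) * inverse ?w ^ (\<tau> * k)"
      unfolding cnj_dual unfolding dual_def sq[symmetric] by (simp add: algebra_simps)
    also have "\<dots> = (1 / of_nat L) * (\<Sum>t<L. \<Sum>u<L. c t * cnj (d u) * (inverse ?w ^ (t * k) * ?w ^ (u * k) * inverse ?w ^ (\<tau> * k)))"
      unfolding sum_product by (simp add: sum_distrib_right sum_distrib_left algebra_simps)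
    also have "\<dots> = (1 / of_nat L) * (\<Sum>t<L. \<Sum>u<L. c t * cnj (d u) * (?w ^ e t u) ^ k)"
      unfolding pw ..
    finally show "dual L c k * cnj (dual L d k) * inverse ?w ^ (\<tau> * k) = (1 / of_nat L) * (\<Sum>t<L. \<Sum>u<L. c t * cnj (d u) * (?w ^ e t u) ^ k)" .
  qed
  also have "\<dots> = (1 / of_nat L) * (\<Sum>t<L. \<Sum>u<L. c t * cnj (d u) * (\<Sum>k<L. (?w ^ e t u) ^ k))"
  proof -
    have sw: "(\<Sum>k<L. \<Sum>t<L. \<Sum>u<L. F t u k) = (\<Sum>t<L. \<Sum>u<L. \<Sum>k<L. F t u k)" for F :: "nat \<Rightarrow> nat \<Rightarrow> nat \<Rightarrow> complex"
      by (subst sum.swap, rule sum.cong, simp, rule sum.swap)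
    show ?thesis unfolding sum_distrib_left[symmetric] sw
      by (simp add: sum_distrib_left)
  qed
  also have "\<dots> = (1 / of_nat L) * (\<Sum>t<L. \<Sum>u<L. c t * cnj (d u) * (if u = (t+\<tau>) mod L then of_nat L else 0))"
    unfolding omega_sum[OF L] e_def using dvd_lemma[OF L]
    by (intro arg_cong[where f="\<lambda>x. _ * x"] sum.cong refl) auto
  also have "\<dots> = (1 / of_nat L) * (\<Sum>t<L. c t * cnj (d ((t+\<tau>) mod L)) * of_nat L)"
    using L by (simp add: if_distrib if_distrib[of "\<lambda>x. _ * x"] sum.delta cong: if_cong)
  also have "\<dots> = pcorr L c d \<tau>" unfolding pcorr_def using L
    by (simp add: sum_distrib_left sum_distrib_right)
  finally show ?thesis by simp
qed

lemma sum_swap3: "(\<Sum>k<L. \<Sum>t<L. \<Sum>u<L. F t u k) = (\<Sum>t<L. \<Sum>u<L. \<Sum>k<L. F t u k :: complex)"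
  by (subst sum.swap, rule sum.cong, simp, rule sum.swap)

lemma parseval: assumes L: "L > 0"
  shows "(\<Sum>\<tau><L. (cmod (\<Sum>k<L. a k * inverse (omega L) ^ (\<tau> * k)))\<^sup>2) = real L * (\<Sum>k<L. (cmod (a k))\<^sup>2)"
proof -
  let ?w = "omega L"
  have cw: "cnj (inverse ?w) = ?w" using cnj_omega
    by (metis complex_cnj_cnj complex_cnj_inverse inverse_inverse_eq)
  have pw: "inverse ?w ^ (\<tau>*k) * ?w ^ (\<tau>*j) = (?w ^ ((L-1)*k + j)) ^ \<tau>" for \<tau> k j
  proof -
    have e: "((L-1)*k + j)*\<tau> = (L-1)*(\<tau>*k) + \<tau>*j" by (simp add: add_mult_distrib add_mult_distrib2 mult.commute mult.left_commute)
    have "inverse ?w ^ (\<tau>*k) * ?w ^ (\<tau>*j) = ?w^((L-1)*(\<tau>*k)) * ?w^(\<tau>*j)"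
      unfolding inv_omega[OF L] by (simp add: power_mult)
    also have "\<dots> = ?w^((L-1)*(\<tau>*k) + \<tau>*j)" by (simp add: power_add)
    also have "\<dots> = ?w^(((L-1)*k+j)*\<tau>)" unfolding e ..
    also have "\<dots> = (?w^((L-1)*k+j))^\<tau>" by (simp add: power_mult)
    finally show ?thesis .
  qed
  have "complex_of_real (\<Sum>\<tau><L. (cmod (\<Sum>k<L. a k * inverse ?w ^ (\<tau> * k)))\<^sup>2)
     = (\<Sum>\<tau><L. (\<Sum>k<L. a k * inverse ?w ^ (\<tau> * k)) * (\<Sum>j<L. cnj (a j) * ?w ^ (\<tau> * j)))"
    unfolding of_real_sum complex_norm_square by (simp add: cnj_sum cw cnj_omega)
  also have "\<dots> = (\<Sum>\<tau><L. \<Sum>k<L. \<Sum>j<L. a k * cnj (a j) * (?w ^ ((L-1)*k + j)) ^ \<tau>)"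
    unfolding sum_product pw[symmetric] by (intro sum.cong refl) (simp add: mult_ac)
  also have "\<dots> = (\<Sum>k<L. \<Sum>j<L. \<Sum>\<tau><L. a k * cnj (a j) * (?w ^ ((L-1)*k + j)) ^ \<tau>)"
    by (rule sum_swap3[of "\<lambda>k j \<tau>. a k * cnj (a j) * (?w ^ ((L-1)*k + j)) ^ \<tau>"])
  also have "\<dots> = (\<Sum>k<L. \<Sum>j<L. a k * cnj (a j) * (\<Sum>\<tau><L. (?w ^ ((L-1)*k + j)) ^ \<tau>))"
    by (simp add: sum_distrib_left)
  also have "\<dots> = (\<Sum>k<L. \<Sum>j<L. a k * cnj (a j) * (if j = k then of_nat L else 0))"
    unfolding omega_sum[OF L] using dvd_lemma[OF L]
    by (intro sum.cong refl) auto
  also have "\<dots> = (\<Sum>k<L. a k * cnj (a k) * of_nat L)"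
    by (simp add: if_distrib[of "\<lambda>x. _ * x"] sum.delta cong: if_cong)
  also have "\<dots> = complex_of_real (real L * (\<Sum>k<L. (cmod (a k))\<^sup>2))"
    unfolding of_real_mult of_real_sum complex_norm_square by (simp add: sum_distrib_left algebra_simps)
  finally show ?thesis by (simp only: of_real_eq_iff)
qed

theorem theorem2:
  fixes L K M n :: nat and \<Omega> :: "nat set" and C :: "nat \<Rightarrow> nat \<Rightarrow> nat \<Rightarrow> complex"
  assumes "L \<ge> 2"
    and "\<Omega> \<subset> {..<L}"
    and "card \<Omega> = n"
    and "K \<ge> 2"
    and "M \<ge> 1"
    and "\<And>i l. i < K \<Longrightarrow> l < M \<Longrightarrow> spectral_constraint L \<Omega> (C i l)"
  shows "theta_c L K M C \<ge> real L / sqrt (real L - real n)"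
proof -
  have L: "L > 0" using assms(1) by simp
  have nL: "n < L" using psubset_card_mono[OF _ assms(2)] assms(3) by simp
  have fin: "finite \<Omega>" using assms(2) finite_subset by blast
  let ?c = "C 0 0" and ?d = "C 1 0"
  have sc: "spectral_constraint L \<Omega> ?c" "spectral_constraint L \<Omega> ?d" using assms(4,5,6) by auto
  define a where "a k = dual L ?c k * cnj (dual L ?d k)" for k
  define X where "X = real L / (real L - real n)"
  have ak: "(cmod (a k))\<^sup>2 = (if k \<in> \<Omega> then 0 else X\<^sup>2)" if "k < L" for k
  proof -
    have e: "(cmod (a k))\<^sup>2 = (cmod (dual L ?c k))\<^sup>2 * (cmod (dual L ?d k))\<^sup>2"
      unfolding a_def by (simp add: norm_mult power_mult_distrib)
    show ?thesis
    proof (cases "k \<in> \<Omega>")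
      case True then show ?thesis using sc that unfolding e spectral_constraint_def by auto
    next
      case False
      then have "(cmod (dual L ?c k))\<^sup>2 = X" "(cmod (dual L ?d k))\<^sup>2 = X"
        using sc that unfolding spectral_constraint_def X_def assms(3) by auto
      then show ?thesis using False unfolding e by (simp add: power2_eq_square)
    qed
  qed
  have "(\<Sum>k<L. (cmod (a k))\<^sup>2) = (\<Sum>k<L. if k \<in> \<Omega> then 0 else X\<^sup>2)"
    using ak by (intro sum.cong) auto
  also have "\<dots> = real (card ({..<L} - \<Omega>)) * X\<^sup>2"
    by (simp add: sum.If_cases Diff_eq)
  also have "card ({..<L} - \<Omega>) = L - n"
    using assms(2,3) fin by (simp add: card_Diff_subset)
  finally have s1: "(\<Sum>k<L. (cmod (a k))\<^sup>2) = real (L - n) * X\<^sup>2" .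
  define th where "th \<tau> = pcorr L ?c ?d \<tau>" for \<tau>
  have th: "th \<tau> = (\<Sum>k<L. a k * inverse (omega L) ^ (\<tau> * k))" for \<tau>
    unfolding th_def a_def using corr_formula[OF L] .
  have s2: "(\<Sum>\<tau><L. (cmod (th \<tau>))\<^sup>2) = real L * (real (L - n) * X\<^sup>2)"
    unfolding th parseval[OF L] s1 ..
  have "\<exists>\<tau><L. (cmod (th \<tau>))\<^sup>2 \<ge> real (L - n) * X\<^sup>2"
  proof (rule ccontr)
    assume "\<not> ?thesis"
    then have "\<forall>\<tau>\<in>{..<L}. (cmod (th \<tau>))\<^sup>2 < real (L - n) * X\<^sup>2" by auto
    then have "(\<Sum>\<tau><L. (cmod (th \<tau>))\<^sup>2) < (\<Sum>\<tau><L. real (L - n) * X\<^sup>2)"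
      using L by (intro sum_strict_mono) auto
    then show False using s2 by simp
  qed
  then obtain \<tau> where t: "\<tau> < L" "(cmod (th \<tau>))\<^sup>2 \<ge> real (L - n) * X\<^sup>2" by auto
  have "real (L - n) * X\<^sup>2 = (real L / sqrt (real L - real n))\<^sup>2"
  proof -
    define D where "D = real L - real n"
    have D: "real (L - n) = D" "D > 0" using nL unfolding D_def by (auto simp: of_nat_diff)
    have "real (L - n) * X\<^sup>2 = (real L)\<^sup>2 / D" unfolding D(1) X_def D_def[symmetric]
      using D(2) by (simp add: power2_eq_square field_simps)
    also have "\<dots> = (real L / sqrt D)\<^sup>2" using D(2) by (simp add: power_divide)
    finally show ?thesis unfolding D_def .
  qed
  then have "(real L / sqrt (real L - real n))\<^sup>2 \<le> (cmod (th \<tau>))\<^sup>2"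
    using t(2) by linarith
  then have "real L / sqrt (real L - real n) \<le> cmod (th \<tau>)"
    by (rule power2_le_imp_le) simp
  also have "cmod (th \<tau>) \<le> theta_c L K M C"
  proof -
    let ?S = "{cmod (pcorr L (C i l) (C j m) \<tau>) | i j l m \<tau>.
       i < K \<and> j < K \<and> i \<noteq> j \<and> l < M \<and> m < M \<and> \<tau> < L}"
    have "?S \<subseteq> (\<lambda>(i,j,l,m,\<tau>). cmod (pcorr L (C i l) (C j m) \<tau>)) ` ({..<K} \<times> {..<K} \<times> {..<M} \<times> {..<M} \<times> {..<L})"
    proof
      fix x assume "x \<in> ?S"
      then obtain i j l m \<tau> where x: "x = cmod (pcorr L (C i l) (C j m) \<tau>)" "i < K" "j < K" "l < M" "m < M" "\<tau> < L"
        by blast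
      show "x \<in> (\<lambda>(i,j,l,m,\<tau>). cmod (pcorr L (C i l) (C j m) \<tau>)) ` ({..<K} \<times> {..<K} \<times> {..<M} \<times> {..<M} \<times> {..<L})"
        using x by (intro image_eqI[of _ _ "(i,j,l,m,\<tau>)"]) auto
    qed
    then have "finite ?S" by (rule finite_subset) auto
    moreover have "cmod (th \<tau>) \<in> ?S" unfolding th_def using t(1) assms(4,5)
      by (intro CollectI exI[of _ 0] exI[of _ 1] exI[of _ "0::nat"] exI[of _ "0::nat"] exI[of _ \<tau>]) auto
    ultimately show ?thesis unfolding theta_c_def by (rule Max_ge)
  qed
  finally show ?thesis .
qed
end
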